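(* Consider the semidiscrete homogenized eddy current system with circuit coupling, in the unknowns $a(t)\in\mathbb{R}^m$, $i_R(t)\in\mathbb{R}$, $v_R(t)\in\mathbb{R}$: \begin{align*} C^\top M_{\nu,\tau}C\tfrac{d}{dt}a+C^\top M_\nu C a&=Xi_R,\\ X^\top\tfrac{d}{dt}a&=v_R, \end{align*} with internal variable $x_R=a$. Under the assumptions listed in the context, this system is a strongly resistance-like element.
   Context: Assumptions: $C\in\mathbb{R}^{f\times m}$ (gauged discrete curl with homogeneous Dirichlet conditions incorporated) has full column rank; $M_\nu\in\mathbb{R}^{f\times f}$ (reluctivity matrix) is symmetric positive definite; $M_{\nu,\tau}\in\mathbb{R}^{f\times f}$ (reluctivity weighted by the cable time constant) is symmetric positive semidefinite; $X\in\mathbb{R}^m$ is the discretized winding density function, a nonzero vector; $Q_\tau$ is the orthogonal projector onto $\ker(C^\top M_{\nu,\tau}C)$, $P_\tau=I-Q_\tau$, and $Q_\tau^\top X=0$ (no excitation outside the coils). Definitions: a function $F(u,y)$ is strongly monotone with respect to $u$ if there is $c>0$ with $\langle F(u,y)-F(\bar u,y),u-\bar u\rangle\ge c\|u-\bar u\|^2$ for all $y,u,\bar u$. A resistance-like element is one described by $f_R(\frac{d}{dt}d_R(x_R,i_R,v_R,t),x_R,i_R,v_R,t)=0$ such that at most one differentiation with respect to $t$ is needed to obtain $x_R'=\varphi_R(x_R,i_R,v_R,t)$, $i_R'=g_R(v_R',x_R,i_R,v_R,t)$; it is strongly resistance-like if additionally $g_R(v_R',x_R,i_R,v_R,t)$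 is continuous and strongly monotone with respect to $v_R'$. *)

theory Defs
  imports "HOL-Analysis.Analysis"
begin

definition spd :: "real^'n^'n \<Rightarrow> bool" where
  "spd M \<longleftrightarrow> transpose M = M \<and> (\<forall>x. x \<noteq> 0 \<longrightarrow> x \<bullet> (M *v x) > 0)"

definition spsd :: "real^'n^'n \<Rightarrow> bool" where
  "spsd M \<longleftrightarrow> transpose M = M \<and> (\<forall>x. x \<bullet> (M *v x) \<ge> 0)"

definition orth_projector_onto :: "real^'n^'n \<Rightarrow> (real^'n) set \<Rightarrow> bool" where
  "orth_projector_onto Q V \<longleftrightarrow> Q ** Q = Q \<and> transpose Q = Q \<and> range (\<lambda>x. Q *v x) = V"

definition strongly_monotone_wrt :: "('u::real_inner \<Rightarrow> 'y \<Rightarrow> 'u) \<Rightarrow> bool" where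
  "strongly_monotone_wrt F \<longleftrightarrow>
     (\<exists>c>0. \<forall>y u ub. (F u y - F ub y) \<bullet> (u - ub) \<ge> c * (norm (u - ub))^2)"

text \<open>An element is described through its derivative array of order one, i.e. the
  element equations together with their first time derivative, as a relation
  DA1 t (x, x', x'') (i, i', i'') (v, v', v'') between time, the internal variable,
  current and voltage, and their first and second time derivatives (treated as
  independent unknowns).\<close>
definition resistance_like_with ::
  "(real \<Rightarrow> 'x \<times> 'x \<times> 'x \<Rightarrow> real \<times> real \<times> real \<Rightarrow> real \<times> real \<times> real \<Rightarrow> bool)
   \<Rightarrow> ('x \<Rightarrow> real \<Rightarrow> real \<Rightarrow> real \<Rightarrow> 'x)
   \<Rightarrow> (real \<Rightarrow> 'x \<Rightarrow> real \<Rightarrow> real \<Rightarrow> real \<Rightarrow> real) \<Rightarrow> bool" where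
  "resistance_like_with DA1 \<phi> g \<longleftrightarrow>
     (\<forall>t x x1 x2 i i1 i2 v v1 v2. DA1 t (x, x1, x2) (i, i1, i2) (v, v1, v2) \<longrightarrow>
        x1 = \<phi> x i v t \<and> i1 = g v1 x i v t)"

definition strongly_resistance_like ::
  "(real \<Rightarrow> 'x::topological_space \<times> 'x \<times> 'x \<Rightarrow> real \<times> real \<times> real \<Rightarrow> real \<times> real \<times> real \<Rightarrow> bool)
   \<Rightarrow> bool" where
  "strongly_resistance_like DA1 \<longleftrightarrow>
     (\<exists>\<phi> g. resistance_like_with DA1 \<phi> g
        \<and> continuous_on UNIV (\<lambda>(v1, x, i, v, t). g v1 x i v t)
        \<and> strongly_monotone_wrt (\<lambda>v1 (x, i, v, t). g v1 x i v t))"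

definition eddy_DA1 ::
  "real^'m^'f \<Rightarrow> real^'f^'f \<Rightarrow> real^'f^'f \<Rightarrow> real^'m
   \<Rightarrow> real \<Rightarrow> (real^'m) \<times> (real^'m) \<times> (real^'m) \<Rightarrow> real \<times> real \<times> real \<Rightarrow> real \<times> real \<times> real \<Rightarrow> bool" where
  "eddy_DA1 C M\<nu> M\<nu>\<tau> X t xs is vs \<longleftrightarrow>
     (case (xs, is, vs) of ((a, a1, a2), (i, i1, i2), (v, v1, v2)) \<Rightarrow>
        (transpose C ** M\<nu>\<tau> ** C) *v a1 + (transpose C ** M\<nu> ** C) *v a = i *s X
      \<and> X \<bullet> a1 = v
      \<and> (transpose C ** M\<nu>\<tau> ** C) *v a2 + (transpose C ** M\<nu> ** C) *v a1 = i1 *s X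
      \<and> X \<bullet> a2 = v1)"

end

theory Submission
  imports Defs
begin

lemma inner_mv: "(x::real^'n) \<bullet> (M *v y) = (transpose M *v x) \<bullet> y"
  by (simp add: dot_lmul_matrix)

lemma inner_tr: "(z::real^'n) \<bullet> (transpose C *v y) = (C *v z) \<bullet> y"
  using inner_mv[of z "transpose C" y] by (simp only: transpose_transpose)

lemma quad_form: "(z::real^'n) \<bullet> ((transpose C ** M ** C) *v z) = (C *v z) \<bullet> (M *v (C *v z))"
  by (simp only: matrix_vector_mul_assoc[symmetric] inner_tr)

lemma psd_zero:
  fixes K :: "real^'n^'n"
  assumes sym: "transpose K = K" and psd: "\<And>z. z \<bullet> (K *v z) \<ge> 0" and z: "x \<bullet> (K *v x) = 0"
  shows "K *v x = 0"
proof -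
  define y where "y = K *v x"
  define b where "b = y \<bullet> y"
  define c where "c = y \<bullet> (K *v y)"
  have c0: "c \<ge> 0" using psd c_def by simp
  have yx: "y \<bullet> (K *v x) = x \<bullet> (K *v y)" using inner_mv[of y K x] sym by (simp add: inner_commute)
  have "\<And>t::real. 0 \<le> (x + t *s y) \<bullet> (K *v (x + t *s y))" using psd by blast
  hence ex: "\<And>t::real. 0 \<le> 2 * t * b + t*t*c"
    using z yx by (simp add: matrix_vector_right_distrib matrix_vector_mult_scaleR inner_add_left inner_add_right scalar_mult_eq_scaleR b_def y_def c_def algebra_simps)
  have "b = 0"
  proof (rule ccontr)
    assume "b \<noteq> 0"
    hence bp: "b > 0" using b_def by simp
    define s where "s = b/(c+1)"
    have sp: "s > 0" using bp c0 s_def by simp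
    have "0 \<le> 2 * (-s) * b + (-s)*(-s)*c" by (rule ex)
    hence "s * (2*b) \<le> s * (s*c)" by (simp add: algebra_simps)
    hence "2*b \<le> s*c" using sp by simp
    moreover have "s*c = b * (c/(c+1))" using s_def by simp
    moreover have "c/(c+1) < 1" using c0 by simp
    hence "b * (c/(c+1)) < b" using bp mult_strict_left_mono[of "c/(c+1)" 1 b] by simp
    ultimately show False using bp by linarith
  qed
  thus ?thesis using b_def y_def by simp
qed

theorem proposition9:
  fixes C :: "real^'m^'f" and M\<nu> M\<nu>\<tau> :: "real^'f^'f" and X :: "real^'m"
    and Q\<tau> :: "real^'m^'m"
  assumes "rank C = CARD('m)"
    and "spd M\<nu>"
    and "spsd M\<nu>\<tau>"
    and "X \<noteq> 0"
    and "orth_projector_onto Q\<tau> {x. (transpose C ** M\<nu>\<tau> ** C) *v x = 0}"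
    and "transpose Q\<tau> *v X = 0"
  shows "strongly_resistance_like (eddy_DA1 C M\<nu> M\<nu>\<tau> X)"
proof -
  define K where "K = transpose C ** M\<nu>\<tau> ** C"
  define A where "A = transpose C ** M\<nu> ** C"
  define Q where "Q = Q\<tau>"
  have injC: "inj ((*v) C)" using assms(1) full_rank_injective by blast
  have Ksym: "transpose K = K" using assms(3) unfolding K_def spsd_def
    by (simp add: matrix_transpose_mul matrix_mul_assoc)
  have Kpsd: "\<And>z. z \<bullet> (K *v z) \<ge> 0"
  proof -
    fix z
    have "z \<bullet> (K *v z) = (C *v z) \<bullet> (M\<nu>\<tau> *v (C *v z))"
      unfolding K_def by (rule quad_form)
    thus "z \<bullet> (K *v z) \<ge> 0" using assms(3) unfolding spsd_def by simp
  qed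
  have Asym: "transpose A = A" using assms(2) unfolding A_def spd_def
    by (simp add: matrix_transpose_mul matrix_mul_assoc)
  have Apd: "\<And>z. z \<noteq> 0 \<Longrightarrow> z \<bullet> (A *v z) > 0"
  proof -
    fix z :: "real^'m" assume "z \<noteq> 0"
    hence Cz: "C *v z \<noteq> 0" using injC by (metis injD matrix_vector_mult_0_right)
    have "z \<bullet> (A *v z) = (C *v z) \<bullet> (M\<nu> *v (C *v z))"
      unfolding A_def by (rule quad_form)
    thus "z \<bullet> (A *v z) > 0" using assms(2) Cz unfolding spd_def by simp
  qed
  have QQ: "Q ** Q = Q" and Qsym: "transpose Q = Q" and Qr: "range ((*v) Q) = {x. K *v x = 0}"
    using assms(5) unfolding orth_projector_onto_def Q_def K_def by auto
  have QX: "Q *v X = 0" using assms(6) Qsym Q_def by (simp del: transpose_matrix_vector)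
  have KQ: "\<And>y. K *v (Q *v y) = 0" using Qr by auto
  have QKv: "\<And>y. Q *v (K *v y) = 0"
  proof -
    fix y
    have "\<And>z. z \<bullet> (Q *v (K *v y)) = 0"
    proof -
      fix z
      have "z \<bullet> (Q *v (K *v y)) = (K *v (Q *v z)) \<bullet> y"
        using inner_mv[of z Q] inner_mv[of "Q *v z" K y] Qsym Ksym by simp
      thus "z \<bullet> (Q *v (K *v y)) = 0" using KQ by simp
    qed
    from this[of "Q *v (K *v y)"] show "Q *v (K *v y) = 0" by simp
  qed
  have QQv: "\<And>y. Q *v (Q *v y) = Q *v y" using QQ by (simp add: matrix_vector_mul_assoc)
  have kerK: "\<And>x. K *v x = 0 \<Longrightarrow> Q *v x = x"
  proof -
    fix x assume "K *v x = 0"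
    then obtain y where "x = Q *v y" using Qr by (metis (mono_tags, lifting) imageE mem_Collect_eq rangeI)
    thus "Q *v x = x" using QQv by simp
  qed
  define N where "N = K + Q ** A"
  have injN: "inj ((*v) N)"
  proof -
    have "\<And>x. N *v x = 0 \<Longrightarrow> x = 0"
    proof -
      fix x assume h: "N *v x = 0"
      hence e: "K *v x + Q *v (A *v x) = 0" unfolding N_def
        by (simp add: matrix_vector_mult_add_rdistrib matrix_vector_mul_assoc)
      hence "Q *v (K *v x + Q *v (A *v x)) = 0" by simp
      hence qa: "Q *v (A *v x) = 0" using QKv QQv by (simp add: matrix_vector_right_distrib)
      hence "K *v x = 0" using e by simp
      hence xq: "Q *v x = x" using kerK by simp
      have "x \<bullet> (A *v x) = (Q *v x) \<bullet> (A *v x)" using xq by simp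
      also have "\<dots> = x \<bullet> (Q *v (A *v x))" using inner_mv[of x Q] Qsym by (simp add: inner_commute)
      finally have "x \<bullet> (A *v x) = 0" using qa by simp
      thus "x = 0" using Apd by force
    qed
    thus ?thesis by (simp add: vec.inj_iff_eq_0)
  qed
  then obtain B where B: "B ** N = mat 1" using matrix_left_invertible_injective by blast
  define L where "L = K + Q"
  have injL: "inj ((*v) L)"
  proof -
    have "\<And>x. L *v x = 0 \<Longrightarrow> x = 0"
    proof -
      fix x assume h: "L *v x = 0"
      hence e: "K *v x + Q *v x = 0" unfolding L_def
        by (simp add: matrix_vector_mult_add_rdistrib)
      hence "Q *v (K *v x + Q *v x) = 0" by simp
      hence qa: "Q *v x = 0" using QKv QQv by (simp add: matrix_vector_right_distrib)
      hence "K *v x = 0" using e by simp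
      thus "x = 0" using kerK qa by metis
    qed
    thus ?thesis by (simp add: vec.inj_iff_eq_0)
  qed
  then obtain B2 where "B2 ** L = mat 1" using matrix_left_invertible_injective by blast
  hence B2: "L ** B2 = mat 1" using matrix_left_right_inverse by blast
  define w where "w = B2 *v X"
  have Lw: "K *v w + Q *v w = X" using B2 unfolding w_def L_def
    by (metis matrix_vector_mul_assoc matrix_vector_mul_lid matrix_vector_mult_add_rdistrib)
  hence "Q *v (K *v w + Q *v w) = 0" using QX by simp
  hence "Q *v w = 0" using QKv QQv by (simp add: matrix_vector_right_distrib)
  hence Kw: "K *v w = X" using Lw by simp
  define \<gamma> where "\<gamma> = w \<bullet> X"
  have \<gamma>pos: "\<gamma> > 0"
  proof -
    have "\<gamma> \<ge> 0" using Kpsd Kw \<gamma>_def by metis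
    moreover have "\<gamma> \<noteq> 0" using psd_zero[OF Ksym Kpsd, of w] Kw assms(4) \<gamma>_def by auto
    ultimately show ?thesis by simp
  qed
  define \<phi> where "\<phi> = (\<lambda>(x::real^'m) (i::real) (v::real) (t::real). B *v (i *s X - A *v x))"
  define \<alpha> where "\<alpha> = w \<bullet> (A *v (B *v X))"
  define \<beta> where "\<beta> = transpose (A ** B ** A) *v w"
  define g where "g = (\<lambda>(v1::real) (x::real^'m) (i::real) (v::real) (t::real). (v1 + i * \<alpha> - \<beta> \<bullet> x) / \<gamma>)"
  have g_eq: "\<And>v1 x i v t. g v1 x i v t = (v1 + w \<bullet> (A *v \<phi> x i v t)) / \<gamma>"
    unfolding g_def \<phi>_def \<alpha>_def \<beta>_def
    by (simp add: matrix_vector_mult_diff_distrib matrix_vector_right_distrib inner_diff_right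
        matrix_vector_mul_assoc dot_lmul_matrix matrix_mul_assoc scalar_mult_eq_scaleR matrix_vector_mult_scaleR)
  have "resistance_like_with (eddy_DA1 C M\<nu> M\<nu>\<tau> X) \<phi> g"
    unfolding resistance_like_with_def
  proof (intro allI impI)
    fix t x x1 x2 i i1 i2 v v1 v2
    assume "eddy_DA1 C M\<nu> M\<nu>\<tau> X t (x, x1, x2) (i, i1, i2) (v, v1, v2)"
    hence e1: "K *v x1 + A *v x = i *s X" and e2: "X \<bullet> x1 = v"
      and e3: "K *v x2 + A *v x1 = i1 *s X" and e4: "X \<bullet> x2 = v1"
      unfolding eddy_DA1_def K_def A_def by auto
    have "Q *v (K *v x2 + A *v x1) = 0" using e3 QX by (simp add: scalar_mult_eq_scaleR matrix_vector_mult_scaleR)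
    hence qa: "Q *v (A *v x1) = 0" using QKv by (simp add: matrix_vector_right_distrib)
    have "N *v x1 = i *s X - A *v x" unfolding N_def using e1 qa
      by (simp add: matrix_vector_mult_add_rdistrib matrix_vector_mul_assoc[symmetric] algebra_simps)
    hence "B *v (N *v x1) = B *v (i *s X - A *v x)" by simp
    hence x1: "x1 = \<phi> x i v t" unfolding \<phi>_def using B
      by (simp add: matrix_vector_mul_assoc)
    have "w \<bullet> (K *v x2 + A *v x1) = i1 * \<gamma>" using e3 \<gamma>_def
      by (simp add: scalar_mult_eq_scaleR)
    moreover have "w \<bullet> (K *v x2) = v1" using inner_mv[of w K x2] Ksym Kw e4 by (simp add: inner_commute)
    ultimately have "v1 + w \<bullet> (A *v x1) = i1 * \<gamma>" by (simp add: inner_add_right)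
    hence "i1 = g v1 x i v t" using g_eq[of v1 x i v t] x1 \<gamma>pos by (simp add: field_simps)
    thus "x1 = \<phi> x i v t \<and> i1 = g v1 x i v t" using x1 by simp
  qed
  moreover have "continuous_on UNIV (\<lambda>(v1, x, i, v, t). g v1 x i v t)"
    unfolding g_def using \<gamma>pos by (auto simp: case_prod_beta intro!: continuous_intros)
  moreover have "strongly_monotone_wrt (\<lambda>v1 (x, i, v, t). g v1 x i v t)"
    unfolding strongly_monotone_wrt_def
  proof (intro exI[of _ "1/\<gamma>"] conjI allI)
    show "0 < 1/\<gamma>" using \<gamma>pos by simp
    fix y :: "(real^'m) \<times> real \<times> real \<times> real" and u ub :: real
    obtain x i v t where y: "y = (x, i, v, t)" by (cases y) auto
    have "g u x i v t - g ub x i v t = (u - ub) / \<gamma>" unfolding g_def by (simp add: diff_divide_distrib[symmetric])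
    thus "1/\<gamma> * (norm (u - ub))\<^sup>2 \<le> ((case y of (x, i, v, t) \<Rightarrow> g u x i v t) - (case y of (x, i, v, t) \<Rightarrow> g ub x i v t)) \<bullet> (u - ub)"
      using y by (simp add: power2_eq_square)
  qed
  ultimately show ?thesis unfolding strongly_resistance_like_def by blast
qed
end
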